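(* Let $D$ be an API-domain whose conductor $[D:\overline{D}]$ is nonzero. Then $D\subseteq\overline{D}$ is a bounded root extension, and hence $\overline{D}$ is an API-domain. Consequently, if $D$ is a quasilocal API-domain, not a field, with $[D:\overline{D}]\neq0$, then $\overline{D}$ is a DVR.
   Context: $\overline{D}$ is the integral closure of $D$ in its quotient field $K$; $[D:\overline{D}]=\{x\in K: x\overline{D}\subseteq D\}$. An API-domain is an integral domain in which for every nonempty subset $\{d_\alpha\}$ of nonzero elements there is $n$ with the ideal $(\{d_\alpha^n\})$ principal. $D\subseteq\overline D$ is a bounded root extension if there is a single natural number $n$ with $x^n\in D$ for all $x\in\overline D$. Quasilocal: unique maximal ideal. DVR: local PID not a field. *)

theory Defs
  imports "HOL-Computational_Algebra.Fraction_Field" "HOL-Computational_Algebra.Polynomial"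
begin

text \<open>Subrings are represented as subsets R of an ambient commutative ring
  (here: the quotient field of D, the type 'a fract).\<close>

definition gen_ideal :: "'b::comm_ring_1 set \<Rightarrow> 'b set \<Rightarrow> 'b set" where
  "gen_ideal R A = {x. \<exists>F c. finite F \<and> F \<subseteq> A \<and> (\<forall>a\<in>F. c a \<in> R) \<and>
                       x = (\<Sum>a\<in>F. c a * a)}"

definition is_ideal :: "'b::comm_ring_1 set \<Rightarrow> 'b set \<Rightarrow> bool" where
  "is_ideal R I \<longleftrightarrow> I \<subseteq> R \<and> 0 \<in> I \<and> (\<forall>a\<in>I. \<forall>b\<in>I. a + b \<in> I)
                  \<and> (\<forall>r\<in>R. \<forall>a\<in>I. r * a \<in> I)"

definition principal_in :: "'b::comm_ring_1 set \<Rightarrow> 'b set \<Rightarrow> bool" where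
  "principal_in R I \<longleftrightarrow> (\<exists>g\<in>R. I = {g * r | r. r \<in> R})"

definition api_set :: "'b::comm_ring_1 set \<Rightarrow> bool" where
  "api_set R \<longleftrightarrow> (\<forall>S. S \<noteq> {} \<and> S \<subseteq> R - {0} \<longrightarrow>
      (\<exists>n::nat. n \<ge> 1 \<and> principal_in R (gen_ideal R ((\<lambda>d. d ^ n) ` S))))"

definition integral_closure :: "'b::field set \<Rightarrow> 'b set" where
  "integral_closure R = {x. \<exists>p. lead_coeff p = 1 \<and> (\<forall>i. coeff p i \<in> R) \<and> poly p x = 0}"

definition conductor :: "'b::field set \<Rightarrow> 'b set \<Rightarrow> 'b set" where
  "conductor R S = {x. \<forall>y\<in>S. x * y \<in> R}"

definition bounded_root_ext :: "'b::comm_ring_1 set \<Rightarrow> 'b set \<Rightarrow> bool" where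
  "bounded_root_ext R S \<longleftrightarrow> (\<exists>n::nat. n \<ge> 1 \<and> (\<forall>x\<in>S. x ^ n \<in> R))"

definition maximal_ideal :: "'b::comm_ring_1 set \<Rightarrow> 'b set \<Rightarrow> bool" where
  "maximal_ideal R M \<longleftrightarrow> is_ideal R M \<and> M \<noteq> R \<and>
     (\<forall>I. is_ideal R I \<and> M \<subseteq> I \<longrightarrow> I = M \<or> I = R)"

definition quasilocal :: "'b::comm_ring_1 set \<Rightarrow> bool" where
  "quasilocal R \<longleftrightarrow> (\<exists>!M. maximal_ideal R M)"

definition is_field_set :: "'b::comm_ring_1 set \<Rightarrow> bool" where
  "is_field_set R \<longleftrightarrow> (\<forall>x\<in>R. x \<noteq> 0 \<longrightarrow> (\<exists>y\<in>R. x * y = 1))"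

text \<open>DVR: local principal ideal domain which is not a field
  (subrings of a field are automatically domains).\<close>
definition DVR :: "'b::comm_ring_1 set \<Rightarrow> bool" where
  "DVR R \<longleftrightarrow> quasilocal R \<and> (\<forall>I. is_ideal R I \<longrightarrow> principal_in R I) \<and> \<not> is_field_set R"

definition dom_in_fract :: "'a::idom fract set" where
  "dom_in_fract = range (\<lambda>a. Fraction_Field.Fract a 1)"

end

theory Submission
  imports Defs
begin


definition subring_set :: "'b::field set \<Rightarrow> bool" where
  "subring_set R \<longleftrightarrow> 0 \<in> R \<and> 1 \<in> R \<and> (\<forall>x\<in>R. \<forall>y\<in>R. x + y \<in> R \<and> x * y \<in> R \<and> - x \<in> R)"

lemma sr_0: "subring_set R \<Longrightarrow> 0 \<in> R" by (simp add: subring_set_def)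
lemma sr_1: "subring_set R \<Longrightarrow> 1 \<in> R" by (simp add: subring_set_def)
lemma sr_add: "subring_set R \<Longrightarrow> x \<in> R \<Longrightarrow> y \<in> R \<Longrightarrow> x + y \<in> R" by (simp add: subring_set_def)
lemma sr_mult: "subring_set R \<Longrightarrow> x \<in> R \<Longrightarrow> y \<in> R \<Longrightarrow> x * y \<in> R" by (simp add: subring_set_def)
lemma sr_uminus: "subring_set R \<Longrightarrow> x \<in> R \<Longrightarrow> - x \<in> R" by (simp add: subring_set_def)
lemma sr_pow: "subring_set R \<Longrightarrow> x \<in> R \<Longrightarrow> x ^ n \<in> R"
  by (induction n) (auto simp: sr_1 sr_mult)
lemma sr_sum: "subring_set R \<Longrightarrow> (\<And>a. a \<in> F \<Longrightarrow> f a \<in> R) \<Longrightarrow> sum f F \<in> R"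
  by (induction F rule: infinite_finite_induct) (auto simp: sr_0 sr_add)
lemma sr_of_nat: "subring_set R \<Longrightarrow> of_nat n \<in> R"
  by (induction n) (auto simp: sr_0 sr_1 sr_add)

lemma gi_mem: "1 \<in> R \<Longrightarrow> a \<in> A \<Longrightarrow> a \<in> gen_ideal R A"
  unfolding gen_ideal_def
  by (rule CollectI, rule exI[of _ "{a}"], rule exI[of _ "\<lambda>_. 1"]) auto

lemma gi_mult:
  fixes t :: "'b::field"
  assumes t: "t \<noteq> 0" and cl: "\<And>a. a \<in> A \<Longrightarrow> t * a \<in> A" and y: "y \<in> gen_ideal R A"
  shows "t * y \<in> gen_ideal R A"
proof -
  from y obtain F c where F: "finite F" "F \<subseteq> A" "\<forall>a\<in>F. c a \<in> R" and yd: "y = (\<Sum>a\<in>F. c a * a)"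
    unfolding gen_ideal_def by blast
  have inj: "inj_on ((*) t) F" using t by (auto intro: inj_onI)
  have "t * y = (\<Sum>a\<in>F. c a * (t * a))" by (simp add: yd sum_distrib_left algebra_simps)
  also have "\<dots> = (\<Sum>b\<in>(*) t ` F. c (b / t) * b)"
    by (subst sum.reindex[OF inj]) (simp add: t)
  finally have eq: "t * y = (\<Sum>b\<in>(*) t ` F. c (b / t) * b)" .
  show ?thesis unfolding gen_ideal_def
    apply (rule CollectI, rule exI[of _ "(*) t ` F"], rule exI[of _ "\<lambda>b. c (b / t)"])
    using F eq cl t by auto
qed

lemma api_core:
  fixes R :: "'b::field set"
  assumes api: "api_set R" and sr: "subring_set R" and Sne: "S \<noteq> {}" and SR: "S \<subseteq> R - {0}"
    and X: "\<And>x. x \<in> X \<Longrightarrow> x \<noteq> 0 \<and> (\<forall>s\<in>S. x * s \<in> S)"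
  shows "\<exists>n\<ge>1. \<forall>x\<in>X. x ^ n \<in> R"
proof -
  from api Sne SR obtain n where n: "n \<ge> 1" and pr: "principal_in R (gen_ideal R ((\<lambda>d. d ^ n) ` S))"
    unfolding api_set_def by blast
  then obtain g where g: "g \<in> R" and geq: "gen_ideal R ((\<lambda>d. d ^ n) ` S) = {g * r | r. r \<in> R}"
    unfolding principal_in_def by blast
  from Sne obtain s0 where s0: "s0 \<in> S" by blast
  have "s0 ^ n \<in> gen_ideal R ((\<lambda>d. d ^ n) ` S)" using s0 by (intro gi_mem sr_1[OF sr]) auto
  then obtain r0 where "s0 ^ n = g * r0" using geq by auto
  moreover have "s0 ^ n \<noteq> 0" using s0 SR by auto
  ultimately have g0: "g \<noteq> 0" by auto
  have gin: "g \<in> gen_ideal R ((\<lambda>d. d ^ n) ` S)" using geq sr_1[OF sr] by force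
  have "x ^ n \<in> R" if x: "x \<in> X" for x
  proof -
    have "x ^ n * g \<in> gen_ideal R ((\<lambda>d. d ^ n) ` S)"
    proof (rule gi_mult[OF _ _ gin])
      show "x ^ n \<noteq> 0" using X[OF x] by simp
      fix a assume "a \<in> (\<lambda>d. d ^ n) ` S"
      then obtain s where s: "s \<in> S" "a = s ^ n" by blast
      then have "x ^ n * a = (x * s) ^ n" by (simp add: power_mult_distrib)
      then show "x ^ n * a \<in> (\<lambda>d. d ^ n) ` S" using X[OF x] s by auto
    qed
    then obtain r where r: "r \<in> R" "x ^ n * g = g * r" using geq by auto
    then have "x ^ n = r" using g0 by (simp add: mult.commute)
    then show ?thesis using r by simp
  qed
  then show ?thesis using n by blast
qed



lemma ic_root:
  fixes x :: "'b::field"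
  assumes sr: "subring_set R" and n: "n \<ge> 1" and xn: "x ^ n \<in> R"
  shows "x \<in> integral_closure R"
proof -
  define p where "p = monom (1::'b) n + [:- (x ^ n):]"
  have cp: "coeff p i = (if i = n then 1 else 0) + (if i = 0 then - (x ^ n) else 0)" for i
    by (simp add: p_def coeff_monom coeff_pCons split: nat.split)
  have deg: "degree p = n"
  proof (rule antisym)
    show "degree p \<le> n" unfolding p_def
      by (rule degree_add_le) (auto simp: degree_monom_le)
    show "n \<le> degree p" using n by (intro le_degree) (simp add: cp)
  qed
  have "lead_coeff p = 1" using n by (simp add: deg cp)
  moreover have "\<forall>i. coeff p i \<in> R" using sr xn by (auto simp: cp sr_0 sr_1 sr_add sr_uminus)
  moreover have "poly p x = 0" by (simp add: p_def poly_monom)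
  ultimately show ?thesis unfolding integral_closure_def by blast
qed

lemma ic_R: "subring_set R \<Longrightarrow> x \<in> R \<Longrightarrow> x \<in> integral_closure R"
  by (rule ic_root[of R 1]) auto

lemma ic_almost:
  fixes R :: "'b::field set"
  assumes sr: "subring_set R" and c: "c \<in> conductor R (integral_closure R)"
    and x: "x \<in> integral_closure R"
  shows "\<exists>m. \<forall>k. c ^ m * x ^ k \<in> R"
proof -
  from x obtain p where lc: "lead_coeff p = 1" and cR: "\<forall>i. coeff p i \<in> R" and px: "poly p x = 0"
    unfolding integral_closure_def by blast
  define m where "m = degree p"
  have cx: "c * x \<in> R" using c x unfolding conductor_def by blast
  have "(\<Sum>i\<le>m. coeff p i * x ^ i) = 0" using px by (simp add: poly_altdef m_def)
  then have "(\<Sum>i<m. coeff p i * x ^ i) + x ^ m = 0"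
    using lc by (simp add: lessThan_Suc_atMost[symmetric] m_def)
  then have xm: "x ^ m = - (\<Sum>i<m. coeff p i * x ^ i)" by (simp add: eq_neg_iff_add_eq_0 add.commute)
  have "c ^ m * x ^ k \<in> R" for k
  proof (induction k rule: less_induct)
    case (less k)
    show ?case
    proof (cases "k < m")
      case True
      have "c ^ m * x ^ k = c ^ (m - k) * (c * x) ^ k"
        using True by (simp add: power_mult_distrib power_add[symmetric])
      have c1: "c \<in> R" using c ic_R[OF sr sr_1[OF sr]] unfolding conductor_def by force
      show ?thesis unfolding \<open>c ^ m * x ^ k = c ^ (m - k) * (c * x) ^ k\<close>
        by (intro sr_mult[OF sr] sr_pow[OF sr] c1 cx)
    next
      case False
      have "c ^ m * x ^ k = c ^ m * x ^ (k - m) * x ^ m"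
        using False by (simp add: power_add[symmetric])
      also have "\<dots> = - (\<Sum>i<m. c ^ m * x ^ (k - m) * (coeff p i * x ^ i))"
        by (simp add: xm sum_distrib_left)
      also have "\<dots> = - (\<Sum>i<m. coeff p i * (c ^ m * x ^ (k - m + i)))"
        by (intro arg_cong[where f=uminus] sum.cong refl) (simp add: power_add mult_ac)
      finally have eq: "c ^ m * x ^ k = - (\<Sum>i<m. coeff p i * (c ^ m * x ^ (k - m + i)))" .
      have "(\<Sum>i<m. coeff p i * (c ^ m * x ^ (k - m + i))) \<in> R"
        apply (rule sr_sum[OF sr])
        apply (rule sr_mult[OF sr])
        using cR apply blast
        apply (rule less.IH)
        using False by auto
      then show ?thesis using eq sr_uminus[OF sr] by simp
    qed
  qed
  then show ?thesis by blast
qed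

lemma root_of_almost:
  fixes R :: "'b::field set"
  assumes api: "api_set R" and sr: "subring_set R" and e: "e \<in> R" "e \<noteq> 0"
    and ex: "\<And>k. e * x ^ k \<in> R"
  shows "\<exists>n\<ge>1. x ^ n \<in> R"
proof (cases "x = 0")
  case True then show ?thesis using sr_0[OF sr] by (intro exI[of _ 1]) auto
next
  case False
  have "\<exists>n\<ge>1. \<forall>y\<in>{x}. y ^ n \<in> R"
  proof (rule api_core[OF api sr, of "range (\<lambda>k. e * x ^ k)"])
    show "range (\<lambda>k. e * x ^ k) \<subseteq> R - {0}" using ex e False by auto
    fix y assume "y \<in> {x}"
    then show "y \<noteq> 0 \<and> (\<forall>s\<in>range (\<lambda>k. e * x ^ k). y * s \<in> range (\<lambda>k. e * x ^ k))"
    proof (intro conjI ballI)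
      show "y \<noteq> 0" using False \<open>y \<in> {x}\<close> by simp
      fix s assume "s \<in> range (\<lambda>k. e * x ^ k)"
      then obtain k where "s = e * x ^ k" by blast
      then have "y * s = e * x ^ Suc k" using \<open>y \<in> {x}\<close> by (simp add: mult_ac)
      then show "y * s \<in> range (\<lambda>k. e * x ^ k)" by blast
    qed
  qed auto
  then show ?thesis by auto
qed



locale apictx =
  fixes R :: "'b::field set" and c :: 'b
  assumes api: "api_set R" and sr: "subring_set R"
    and cc: "c \<in> conductor R (integral_closure R)" and c0: "c \<noteq> 0"
begin

abbreviation "IC \<equiv> integral_closure R"

lemma cR: "c \<in> R"
  using cc ic_R[OF sr sr_1[OF sr]] unfolding conductor_def by force

lemma cmul: "x \<in> IC \<Longrightarrow> c * x \<in> R"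
  using cc unfolding conductor_def by blast

lemma ic_pow_root: "x \<in> IC \<Longrightarrow> \<exists>n\<ge>1. x ^ n \<in> R"
proof -
  assume x: "x \<in> IC"
  from ic_almost[OF sr cc x] obtain m where m: "\<And>k. c ^ m * x ^ k \<in> R" by blast
  show ?thesis by (rule root_of_almost[OF api sr _ _ m]) (use cR c0 sr in \<open>auto intro: sr_pow\<close>)
qed

lemma ic_iff: "x \<in> IC \<longleftrightarrow> (\<exists>n\<ge>1. x ^ n \<in> R)"
  using ic_pow_root ic_root[OF sr] by blast

lemma ic_powI: "x \<in> IC \<Longrightarrow> x ^ k \<in> IC"
proof -
  assume "x \<in> IC"
  then obtain n where n: "n \<ge> 1" "x ^ n \<in> R" using ic_iff by blast
  have "(x ^ k) ^ n = (x ^ n) ^ k" by (simp add: power_mult[symmetric] mult.commute)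
  then have "(x ^ k) ^ n \<in> R" using n sr_pow[OF sr] by simp
  then show ?thesis using n ic_iff by blast
qed

lemma ic_mult: "x \<in> IC \<Longrightarrow> y \<in> IC \<Longrightarrow> x * y \<in> IC"
proof -
  assume "x \<in> IC" "y \<in> IC"
  then obtain a b where a: "a \<ge> 1" "x ^ a \<in> R" and b: "b \<ge> 1" "y ^ b \<in> R" using ic_iff by meson
  have "(x * y) ^ (a * b) = (x ^ a) ^ b * (y ^ b) ^ a"
    by (simp add: power_mult_distrib power_mult[symmetric] mult.commute)
  then have "(x * y) ^ (a * b) \<in> R" using a b sr by (simp add: sr_mult sr_pow)
  moreover have "a * b \<ge> 1" using a b by simp
  ultimately show ?thesis using ic_iff by blast
qed

lemma ic_add: "x \<in> IC \<Longrightarrow> y \<in> IC \<Longrightarrow> x + y \<in> IC"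
proof -
  assume x: "x \<in> IC" and y: "y \<in> IC"
  have "(c * c) * (x + y) ^ k \<in> R" for k
  proof -
    have "(c * c) * (x + y) ^ k = (\<Sum>i\<le>k. of_nat (k choose i) * ((c * x ^ i) * (c * y ^ (k - i))))"
      unfolding binomial_ring sum_distrib_left
      by (intro sum.cong refl) (simp only: mult_ac)
    also have "\<dots> \<in> R"
      by (intro sr_sum[OF sr] sr_mult[OF sr] sr_of_nat[OF sr] cmul ic_powI x y)
    finally show ?thesis .
  qed
  then have "\<exists>n\<ge>1. (x + y) ^ n \<in> R"
    by (intro root_of_almost[OF api sr, of "c * c"]) (use cR c0 sr in \<open>auto intro: sr_mult\<close>)
  then show ?thesis using ic_iff by blast
qed

lemma ic_uminus: "x \<in> IC \<Longrightarrow> - x \<in> IC"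
proof -
  assume "x \<in> IC"
  then obtain n where n: "n \<ge> 1" "x ^ n \<in> R" using ic_iff by blast
  have "(- x) ^ n = (- 1) ^ n * x ^ n" by (rule power_minus)
  also have "\<dots> \<in> R" by (rule sr_mult[OF sr sr_pow[OF sr sr_uminus[OF sr sr_1[OF sr]]] n(2)])
  finally show ?thesis using n ic_iff by blast
qed

lemma ic_sr: "subring_set IC"
  unfolding subring_set_def
proof (intro conjI ballI)
  show "0 \<in> IC" by (rule ic_R[OF sr sr_0[OF sr]])
  show "1 \<in> IC" by (rule ic_R[OF sr sr_1[OF sr]])
  fix x y assume "x \<in> IC" "y \<in> IC"
  then show "x + y \<in> IC" "x * y \<in> IC" "- x \<in> IC" by (auto intro: ic_add ic_mult ic_uminus)
qed

lemma RIC: "R \<subseteq> IC" using ic_R[OF sr] by blast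

lemma bounded: "\<exists>N\<ge>1. \<forall>x\<in>IC. x ^ N \<in> R"
proof -
  have "\<exists>N\<ge>1. \<forall>x\<in>IC - {0}. x ^ N \<in> R"
  proof (rule api_core[OF api sr, of "(\<lambda>y. c * y) ` (IC - {0})"])
    show "(\<lambda>y. c * y) ` (IC - {0}) \<noteq> {}" using ic_R[OF sr sr_1[OF sr]] by auto
    show "(\<lambda>y. c * y) ` (IC - {0}) \<subseteq> R - {0}" using cmul c0 by auto
    fix x assume x: "x \<in> IC - {0}"
    show "x \<noteq> 0 \<and> (\<forall>s\<in>(\<lambda>y. c * y) ` (IC - {0}). x * s \<in> (\<lambda>y. c * y) ` (IC - {0}))"
    proof (intro conjI ballI)
      show "x \<noteq> 0" using x by simp
      fix s assume "s \<in> (\<lambda>y. c * y) ` (IC - {0})"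
      then obtain y where y: "y \<in> IC - {0}" "s = c * y" by blast
      then have "x * s = c * (x * y)" by (simp add: mult_ac)
      moreover have "x * y \<in> IC - {0}" using x y ic_mult by auto
      ultimately show "x * s \<in> (\<lambda>y. c * y) ` (IC - {0})" by blast
    qed
  qed
  then obtain N where N: "N \<ge> 1" "\<forall>x\<in>IC - {0}. x ^ N \<in> R" by blast
  have "\<forall>x\<in>IC. x ^ N \<in> R"
  proof
    fix x assume "x \<in> IC"
    show "x ^ N \<in> R"
    proof (cases "x = 0")
      case True then show ?thesis using N sr_0[OF sr] by (simp add: power_0_left)
    next
      case False then show ?thesis using N \<open>x \<in> IC\<close> by blast
    qed
  qed
  then show ?thesis using N by blast
qed

lemma api_IC: "api_set IC"
  unfolding api_set_def
proof (intro allI impI)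
  fix S assume S: "S \<noteq> {} \<and> S \<subseteq> IC - {0}"
  obtain N where N: "N \<ge> 1" "\<forall>x\<in>IC. x ^ N \<in> R" using bounded by blast
  have "(\<lambda>s. s ^ N) ` S \<noteq> {} \<and> (\<lambda>s. s ^ N) ` S \<subseteq> R - {0}" using S N by auto
  then obtain m h where m: "m \<ge> 1" and h: "h \<in> R"
    and heq: "gen_ideal R ((\<lambda>d. d ^ m) ` ((\<lambda>s. s ^ N) ` S)) = {h * r | r. r \<in> R}"
    using api unfolding api_set_def principal_in_def by meson
  define A where "A = (\<lambda>d. d ^ (N * m)) ` S"
  have Aeq: "(\<lambda>d. d ^ m) ` ((\<lambda>s. s ^ N) ` S) = A"
    unfolding A_def image_image by (simp add: power_mult)
  have AR: "\<And>a. a \<in> A \<Longrightarrow> \<exists>d\<in>R. a = h * d"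
  proof -
    fix a assume "a \<in> A"
    then have "a \<in> gen_ideal R A" by (intro gi_mem sr_1[OF sr])
    then show "\<exists>d\<in>R. a = h * d" using heq Aeq by auto
  qed
  then obtain dd where dd: "\<And>a. a \<in> A \<Longrightarrow> dd a \<in> R \<and> a = h * dd a" by metis
  have gi: "gen_ideal IC A = {h * r | r. r \<in> IC}"
  proof (intro equalityI subsetI)
    fix y assume "y \<in> gen_ideal IC A"
    then obtain F cf where F: "finite F" "F \<subseteq> A" "\<forall>a\<in>F. cf a \<in> IC" and yd: "y = (\<Sum>a\<in>F. cf a * a)"
      unfolding gen_ideal_def by blast
    have "y = (\<Sum>a\<in>F. cf a * (h * dd a))" unfolding yd
      by (intro sum.cong refl) (use F dd in auto)
    also have "\<dots> = h * (\<Sum>a\<in>F. cf a * dd a)" by (simp add: sum_distrib_left mult_ac)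
    finally have "y = h * (\<Sum>a\<in>F. cf a * dd a)" .
    moreover have "(\<Sum>a\<in>F. cf a * dd a) \<in> IC"
      using F dd RIC by (intro sr_sum[OF ic_sr] sr_mult[OF ic_sr]) auto
    ultimately show "y \<in> {h * r | r. r \<in> IC}" by blast
  next
    fix y assume "y \<in> {h * r | r. r \<in> IC}"
    then obtain r where r: "r \<in> IC" "y = h * r" by blast
    have "h \<in> gen_ideal R A" using heq Aeq sr_1[OF sr] by force
    then obtain F cf where F: "finite F" "F \<subseteq> A" "\<forall>a\<in>F. cf a \<in> R" and hd: "h = (\<Sum>a\<in>F. cf a * a)"
      unfolding gen_ideal_def by blast
    have "y = (\<Sum>a\<in>F. (cf a * r) * a)" 
    proof -
      have "y = (\<Sum>a\<in>F. cf a * a) * r" using r hd by simp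
      also have "\<dots> = (\<Sum>a\<in>F. cf a * a * r)" by (rule sum_distrib_right)
      also have "\<dots> = (\<Sum>a\<in>F. (cf a * r) * a)" by (rule sum.cong[OF refl]) (simp add: mult_ac)
      finally show ?thesis .
    qed
    moreover have "\<forall>a\<in>F. cf a * r \<in> IC" using F r RIC by (auto intro: ic_mult)
    ultimately show "y \<in> gen_ideal IC A" unfolding gen_ideal_def
      by (intro CollectI exI[of _ F] exI[of _ "\<lambda>a. cf a * r"]) (use F in auto)
  qed
  have hI: "h \<in> IC" using h RIC by blast
  show "\<exists>n\<ge>1. principal_in IC (gen_ideal IC ((\<lambda>d. d ^ n) ` S))"
  proof (intro exI[of _ "N * m"] conjI)
    show "N * m \<ge> 1" using N m by simp
    show "principal_in IC (gen_ideal IC ((\<lambda>d. d ^ (N * m)) ` S))"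
      unfolding principal_in_def A_def[symmetric] gi using hI by blast
  qed
qed

end


lemma ideal_sum:
  assumes I: "is_ideal R I" and h: "\<And>a. a \<in> F \<Longrightarrow> cf a \<in> R \<and> f a \<in> I"
  shows "(\<Sum>a\<in>F. cf a * f a) \<in> I"
  using h
proof (induction F rule: infinite_finite_induct)
  case (infinite A) then show ?case using I by (simp add: is_ideal_def)
next
  case empty then show ?case using I by (simp add: is_ideal_def)
next
  case (insert x F)
  have "cf x * f x \<in> I" using insert.prems I unfolding is_ideal_def by blast
  moreover have "(\<Sum>a\<in>F. cf a * f a) \<in> I" using insert by blast
  ultimately show ?case using insert.hyps I unfolding is_ideal_def by simp
qed

lemma unit_not_in_max:
  fixes R :: "'b::field set"
  assumes M: "maximal_ideal R M" and u: "u \<in> R" "y \<in> R" "u * y = 1"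
  shows "u \<notin> M"
proof
  assume "u \<in> M"
  then have "y * u \<in> M" using M u unfolding maximal_ideal_def is_ideal_def by blast
  then have one: "1 \<in> M" using u by (simp add: mult.commute)
  have "R \<subseteq> M"
  proof
    fix r assume "r \<in> R"
    then have "r * 1 \<in> M" using one M unfolding maximal_ideal_def is_ideal_def by blast
    then show "r \<in> M" by simp
  qed
  then show False using M unfolding maximal_ideal_def is_ideal_def by blast
qed

lemma zorn_max:
  fixes R :: "'b::field set"
  assumes sr: "subring_set R" and I: "is_ideal R I" and one: "1 \<notin> I"
  shows "\<exists>M. maximal_ideal R M \<and> I \<subseteq> M"
proof -
  define A where "A = {J. is_ideal R J \<and> I \<subseteq> J \<and> 1 \<notin> J}"
  have "\<forall>C\<in>chains A. \<exists>U\<in>A. \<forall>X\<in>C. X \<subseteq> U"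
  proof
    fix C assume C: "C \<in> chains A"
    show "\<exists>U\<in>A. \<forall>X\<in>C. X \<subseteq> U"
    proof (cases "C = {}")
      case True then show ?thesis using I one unfolding A_def by blast
    next
      case False
      have CA: "C \<subseteq> A" and ch: "\<And>X Y. X \<in> C \<Longrightarrow> Y \<in> C \<Longrightarrow> X \<subseteq> Y \<or> Y \<subseteq> X"
        using C unfolding chains_def chain_subset_def by auto
      have "\<Union>C \<in> A" unfolding A_def is_ideal_def
      proof (intro CollectI conjI ballI)
        show "\<Union>C \<subseteq> R" using CA unfolding A_def is_ideal_def by blast
        show "0 \<in> \<Union>C" using CA False unfolding A_def is_ideal_def by blast
        show "I \<subseteq> \<Union>C" using CA False unfolding A_def by blast
        show "1 \<notin> \<Union>C" using CA unfolding A_def by blast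
        fix a b assume a: "a \<in> \<Union>C" and b: "b \<in> \<Union>C"
        then obtain X Y where X: "X \<in> C" "a \<in> X" and Y: "Y \<in> C" "b \<in> Y" by blast
        show "a + b \<in> \<Union>C"
        proof (cases "X \<subseteq> Y")
          case True then show ?thesis using X Y CA unfolding A_def is_ideal_def by blast
        next
          case False then have "Y \<subseteq> X" using ch X Y by blast
          then show ?thesis using X Y CA unfolding A_def is_ideal_def by blast
        qed
      next
        fix r a assume "r \<in> R" "a \<in> \<Union>C"
        then show "r * a \<in> \<Union>C" using CA unfolding A_def is_ideal_def by blast
      qed
      then show ?thesis by blast
    qed
  qed
  from Zorn_Lemma2[OF this] obtain M where MA: "M \<in> A" and Mmax: "\<forall>X\<in>A. M \<subseteq> X \<longrightarrow> X = M" by blast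
  have "maximal_ideal R M" unfolding maximal_ideal_def
  proof (intro conjI allI impI)
    show "is_ideal R M" using MA unfolding A_def by blast
    show "M \<noteq> R" using MA sr_1[OF sr] unfolding A_def by blast
    fix J assume J: "is_ideal R J \<and> M \<subseteq> J"
    show "J = M \<or> J = R"
    proof (cases "1 \<in> J")
      case True
      have "R \<subseteq> J"
      proof
        fix r assume "r \<in> R"
        then have "r * 1 \<in> J" using True J unfolding is_ideal_def by blast
        then show "r \<in> J" by simp
      qed
      then show ?thesis using J unfolding is_ideal_def by blast
    next
      case False
      then have "J \<in> A" using J MA unfolding A_def by blast
      then show ?thesis using Mmax J by blast
    qed
  qed
  then show ?thesis using MA unfolding A_def by blast
qed

lemma nonunit_in_M:
  fixes R :: "'b::field set"
  assumes sr: "subring_set R" and ql: "quasilocal R" and M: "maximal_ideal R M"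
    and d: "d \<in> R" and nu: "\<not> (\<exists>y\<in>R. d * y = 1)"
  shows "d \<in> M"
proof -
  have I: "is_ideal R {d * r | r. r \<in> R}" unfolding is_ideal_def
  proof (intro conjI ballI)
    show "{d * r | r. r \<in> R} \<subseteq> R" using d sr by (auto intro: sr_mult)
    show "0 \<in> {d * r | r. r \<in> R}" using sr_0[OF sr] by force
    fix a b assume "a \<in> {d * r | r. r \<in> R}" "b \<in> {d * r | r. r \<in> R}"
    then obtain r1 r2 where "r1 \<in> R" "r2 \<in> R" "a = d * r1" "b = d * r2" by blast
    then show "a + b \<in> {d * r | r. r \<in> R}"
      using sr by (auto intro!: exI[of _ "r1 + r2"] sr_add simp: distrib_left)
  next
    fix r a assume "r \<in> R" "a \<in> {d * r | r. r \<in> R}"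
    then obtain r1 where "r1 \<in> R" "a = d * r1" by blast
    then show "r * a \<in> {d * r | r. r \<in> R}"
      using sr \<open>r \<in> R\<close> by (auto intro!: exI[of _ "r * r1"] sr_mult simp: mult_ac)
  qed
  have "1 \<notin> {d * r | r. r \<in> R}" using nu by auto
  from zorn_max[OF sr I this] obtain M' where M': "maximal_ideal R M'" "{d * r | r. r \<in> R} \<subseteq> M'"
    by blast
  have "M' = M" using ql M M'(1) unfolding quasilocal_def by blast
  moreover have "d \<in> M'" using M'(2) sr_1[OF sr] by force
  ultimately show ?thesis by simp
qed



context apictx
begin

lemma valuation:
  assumes ql: "quasilocal R" and a: "a \<in> IC" "a \<noteq> 0" and b: "b \<in> IC" "b \<noteq> 0"
  shows "b / a \<in> IC \<or> a / b \<in> IC"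
proof -
  obtain M where M: "maximal_ideal R M" using ql unfolding quasilocal_def by blast
  obtain N where N: "N \<ge> 1" "\<forall>x\<in>IC. x ^ N \<in> R" using bounded by blast
  have "{a ^ N, b ^ N} \<noteq> {} \<and> {a ^ N, b ^ N} \<subseteq> R - {0}" using a b N by auto
  then obtain n g where n: "n \<ge> 1" and g: "g \<in> R"
    and geq: "gen_ideal R ((\<lambda>d. d ^ n) ` {a ^ N, b ^ N}) = {g * r | r. r \<in> R}"
    using api unfolding api_set_def principal_in_def by meson
  define A where "A = (a ^ N) ^ n"
  define B where "B = (b ^ N) ^ n"
  have im: "(\<lambda>d. d ^ n) ` {a ^ N, b ^ N} = {A, B}" by (simp add: A_def B_def)
  have A0: "A \<noteq> 0" and B0: "B \<noteq> 0" using a b by (auto simp: A_def B_def)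
  have "A \<in> gen_ideal R {A, B}" by (intro gi_mem sr_1[OF sr]) auto
  then obtain r where r: "r \<in> R" "A = g * r" using geq im by auto
  have "B \<in> gen_ideal R {A, B}" by (intro gi_mem sr_1[OF sr]) auto
  then obtain s where s: "s \<in> R" "B = g * s" using geq im by auto
  have g0: "g \<noteq> 0" using A0 r by auto
  have "g \<in> gen_ideal R {A, B}" using geq im sr_1[OF sr] by force
  then obtain F cf where F: "finite F" "F \<subseteq> {A, B}" "\<forall>t\<in>F. cf t \<in> R" and gd: "g = (\<Sum>t\<in>F. cf t * t)"
    unfolding gen_ideal_def by blast
  have unit: "(\<exists>y\<in>R. r * y = 1) \<or> (\<exists>y\<in>R. s * y = 1)"
  proof (rule ccontr)
    assume "\<not> ?thesis"
    then have rM: "r \<in> M" and sM: "s \<in> M" using nonunit_in_M[OF sr ql M] r s by auto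
    have "(\<Sum>t\<in>F. cf t * (t / g)) \<in> M"
    proof (rule ideal_sum)
      show "is_ideal R M" using M unfolding maximal_ideal_def by blast
      fix t assume t: "t \<in> F"
      have "t / g \<in> M"
      proof (cases "t = A")
        case True then show ?thesis using r g0 rM by simp
      next
        case False then have "t = B" using t F by blast
        then show ?thesis using s g0 sM by simp
      qed
      then show "cf t \<in> R \<and> t / g \<in> M" using F t by blast
    qed
    moreover have "(\<Sum>t\<in>F. cf t * (t / g)) = 1"
    proof -
      have "(\<Sum>t\<in>F. cf t * (t / g)) = (\<Sum>t\<in>F. cf t * t) / g"
        by (simp add: sum_divide_distrib)
      then show ?thesis using gd g0 by simp
    qed
    ultimately have "1 \<in> M" by simp
    then show False using unit_not_in_max[OF M sr_1[OF sr] sr_1[OF sr]] by simp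
  qed
  have Nn: "N * n \<ge> 1" using N n by simp
  show ?thesis
  proof (cases "\<exists>y\<in>R. r * y = 1")
    case True
    then obtain y where y: "y \<in> R" "r * y = 1" by blast
    have "(b / a) ^ (N * n) = B / A" by (simp only: A_def B_def power_divide power_mult)
    also have "\<dots> = s / r" using r s g0 by simp
    also have "\<dots> = s * y"
    proof -
      have "r \<noteq> 0" using y by auto
      then have "y = 1 / r" using y by (simp add: eq_divide_eq mult.commute)
      then show ?thesis by simp
    qed
    finally have "(b / a) ^ (N * n) \<in> R" using s y sr by (simp add: sr_mult)
    then show ?thesis using ic_root[OF sr Nn] by blast
  next
    case False
    then obtain y where y: "y \<in> R" "s * y = 1" using unit by blast
    have "(a / b) ^ (N * n) = A / B" by (simp only: A_def B_def power_divide power_mult)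
    also have "\<dots> = r / s" using r s g0 by simp
    also have "\<dots> = r * y"
    proof -
      have "s \<noteq> 0" using y by auto
      then have "y = 1 / s" using y by (simp add: eq_divide_eq mult.commute)
      then show ?thesis by simp
    qed
    finally have "(a / b) ^ (N * n) \<in> R" using r y sr by (simp add: sr_mult)
    then show ?thesis using ic_root[OF sr Nn] by blast
  qed
qed

end


context apictx
begin

definition "PP = {x \<in> IC. \<not> (\<exists>y\<in>IC. x * y = 1)}"

lemma PP_mult: "x \<in> PP \<Longrightarrow> r \<in> IC \<Longrightarrow> r * x \<in> PP"
proof -
  assume x: "x \<in> PP" and r: "r \<in> IC"
  have "r * x \<in> IC" using x r ic_mult unfolding PP_def by blast
  moreover have "\<not> (\<exists>y\<in>IC. r * x * y = 1)"
  proof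
    assume "\<exists>y\<in>IC. r * x * y = 1"
    then obtain y where "y \<in> IC" "r * x * y = 1" by blast
    then have "x * (r * y) = 1" "r * y \<in> IC" using r ic_mult by (auto simp: mult_ac)
    then show False using x unfolding PP_def by blast
  qed
  ultimately show ?thesis unfolding PP_def by blast
qed

lemma PP_add:
  assumes ql: "quasilocal R" and x: "x \<in> PP" and y: "y \<in> PP"
  shows "x + y \<in> PP"
proof -
  have xI: "x \<in> IC" and yI: "y \<in> IC" using x y unfolding PP_def by auto
  have key: "a + b \<in> PP" if a: "a \<in> PP" "a \<noteq> 0" and t: "b / a \<in> IC" for a b
  proof -
    have "a + b = (1 + b / a) * a" using a(2) by (simp add: distrib_right)
    moreover have "1 + b / a \<in> IC" using t ic_add ic_R[OF sr sr_1[OF sr]] by blast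
    ultimately show ?thesis using PP_mult a(1) by simp
  qed
  show ?thesis
  proof (cases "x = 0 \<or> y = 0")
    case True then show ?thesis using x y by auto
  next
    case False
    then have "y / x \<in> IC \<or> x / y \<in> IC" using valuation[OF ql xI _ yI] by blast
    then show ?thesis
    proof
      assume "y / x \<in> IC" then show ?thesis using key[OF x] False by blast
    next
      assume "x / y \<in> IC" then have "y + x \<in> PP" using key[OF y] False by blast
      then show ?thesis by (simp add: add.commute)
    qed
  qed
qed

lemma one_notin_PP: "1 \<notin> PP"
  unfolding PP_def using ic_R[OF sr sr_1[OF sr]] by force

lemma zero_in_PP: "0 \<in> PP"
  unfolding PP_def using ic_R[OF sr sr_0[OF sr]] by force

lemma PP_ideal: "quasilocal R \<Longrightarrow> is_ideal IC PP"
  unfolding is_ideal_def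
proof (intro conjI ballI)
  assume ql: "quasilocal R"
  show "PP \<subseteq> IC" unfolding PP_def by blast
  show "0 \<in> PP" by (rule zero_in_PP)
  fix a b assume "a \<in> PP" "b \<in> PP"
  then show "a + b \<in> PP" by (rule PP_add[OF ql])
next
  fix r a assume "r \<in> IC" "a \<in> PP"
  then show "r * a \<in> PP" using PP_mult by blast
qed

lemma PP_max:
  assumes ql: "quasilocal R"
  shows "maximal_ideal IC PP"
  unfolding maximal_ideal_def
proof (intro conjI allI impI)
  show "is_ideal IC PP" by (rule PP_ideal[OF ql])
  show "PP \<noteq> IC" using one_notin_PP ic_R[OF sr sr_1[OF sr]] by blast
  fix J assume J: "is_ideal IC J \<and> PP \<subseteq> J"
  show "J = PP \<or> J = IC"
  proof (cases "J \<subseteq> PP")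
    case True then show ?thesis using J by blast
  next
    case False
    then obtain u where u: "u \<in> J" "u \<notin> PP" by blast
    then have uI: "u \<in> IC" using J unfolding is_ideal_def by blast
    then obtain v where v: "v \<in> IC" "u * v = 1" using u unfolding PP_def by blast
    have "v * u \<in> J" using J u v unfolding is_ideal_def by blast
    then have one: "1 \<in> J" using v by (simp add: mult.commute)
    have "IC \<subseteq> J"
    proof
      fix r assume "r \<in> IC"
      then have "r * 1 \<in> J" using one J unfolding is_ideal_def by blast
      then show "r \<in> J" by simp
    qed
    then show ?thesis using J unfolding is_ideal_def by blast
  qed
qed

lemma ql_IC:
  assumes ql: "quasilocal R"
  shows "quasilocal IC"
  unfolding quasilocal_def
proof (rule ex1I[of _ PP])
  show "maximal_ideal IC PP" by (rule PP_max[OF ql])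
  fix M assume M: "maximal_ideal IC M"
  have "M \<subseteq> PP"
  proof
    fix x assume x: "x \<in> M"
    have "is_ideal IC M" using M by (simp add: maximal_ideal_def)
    then have xI: "x \<in> IC" using x by (auto simp: is_ideal_def)
    have "\<not> (\<exists>y\<in>IC. x * y = 1)"
    proof
      assume "\<exists>y\<in>IC. x * y = 1"
      then obtain y where "y \<in> IC" "x * y = 1" by blast
      then show False using unit_not_in_max[OF M xI] x by blast
    qed
    then show "x \<in> PP" using xI unfolding PP_def by blast
  qed
  moreover have "\<forall>I. is_ideal IC I \<and> M \<subseteq> I \<longrightarrow> I = M \<or> I = IC"
    using M by (simp add: maximal_ideal_def)
  ultimately have "PP = M \<or> PP = IC" using PP_ideal[OF ql] by blast
  moreover have "PP \<noteq> IC" using PP_max[OF ql] by (simp add: maximal_ideal_def)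
  ultimately show "M = PP" by blast
qed

lemma ic_root_closed: "z ^ n \<in> IC \<Longrightarrow> n \<ge> 1 \<Longrightarrow> z \<in> IC"
proof -
  assume z: "z ^ n \<in> IC" and n: "n \<ge> 1"
  then obtain k where k: "k \<ge> 1" "(z ^ n) ^ k \<in> R" using ic_iff by blast
  then have "z ^ (n * k) \<in> R" by (simp only: power_mult)
  moreover have "n * k \<ge> 1" using n k by simp
  ultimately show ?thesis using ic_iff by blast
qed

lemma principal_IC:
  assumes ql: "quasilocal R" and I: "is_ideal IC I"
  shows "principal_in IC I"
proof (cases "I \<subseteq> {0}")
  case True
  moreover have "0 \<in> I" using I by (simp add: is_ideal_def)
  ultimately have "I = {0}" by blast
  then have "I = {0 * r | r. r \<in> IC}" using ic_R[OF sr sr_0[OF sr]] by auto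
  then show ?thesis unfolding principal_in_def using ic_R[OF sr sr_0[OF sr]] by blast
next
  case False
  define S where "S = I - {0}"
  have IIC: "I \<subseteq> IC" using I by (simp add: is_ideal_def)
  have S: "S \<noteq> {} \<and> S \<subseteq> IC - {0}" using False IIC unfolding S_def by blast
  obtain n where n: "n \<ge> 1" and pn: "principal_in IC (gen_ideal IC ((\<lambda>d. d ^ n) ` S))"
    using api_IC[unfolded api_set_def, rule_format, OF S] by blast
  obtain g where g: "g \<in> IC"
    and geq: "gen_ideal IC ((\<lambda>d. d ^ n) ` S) = {g * r | r. r \<in> IC}"
    using pn unfolding principal_in_def by blast
  have sn: "\<exists>r\<in>IC. s ^ n = g * r" if "s \<in> S" for s
  proof -
    have "s ^ n \<in> gen_ideal IC ((\<lambda>d. d ^ n) ` S)"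
      using that by (intro gi_mem ic_R[OF sr sr_1[OF sr]]) auto
    then show ?thesis using geq by auto
  qed
  have g0: "g \<noteq> 0"
  proof
    assume "g = 0"
    obtain s where "s \<in> S" using S by blast
    then show False using sn[of s] \<open>g = 0\<close> S by auto
  qed
  have "g \<in> gen_ideal IC ((\<lambda>d. d ^ n) ` S)" using geq ic_R[OF sr sr_1[OF sr]] by force
  then obtain F cf where F: "finite F" "F \<subseteq> (\<lambda>d. d ^ n) ` S" "\<forall>t\<in>F. cf t \<in> IC"
    and gd: "g = (\<Sum>t\<in>F. cf t * t)"
    unfolding gen_ideal_def by blast
  have "\<exists>t\<in>F. g / t \<in> IC"
  proof (rule ccontr)
    assume nt: "\<not> ?thesis"
    have "(\<Sum>t\<in>F. cf t * (t / g)) \<in> PP"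
    proof (rule ideal_sum[OF PP_ideal[OF ql]])
      fix t assume t: "t \<in> F"
      then obtain s where s: "s \<in> S" "t = s ^ n" using F by blast
      then have t0: "t \<noteq> 0" and tI: "t \<in> IC" using S ic_powI by auto
      have "g / t \<notin> IC" using nt t by blast
      then have tg: "t / g \<in> IC" using valuation[OF ql tI t0 g g0] by blast
      have "t / g \<in> PP" unfolding PP_def
      proof (intro CollectI conjI tg notI)
        assume "\<exists>y\<in>IC. t / g * y = 1"
        then obtain y where y: "y \<in> IC" "t / g * y = 1" by blast
        then have "y = g / t" using t0 g0 by (simp add: field_simps)
        then show False using y \<open>g / t \<notin> IC\<close> by simp
      qed
      then show "cf t \<in> IC \<and> t / g \<in> PP" using F t by blast
    qed
    moreover have "(\<Sum>t\<in>F. cf t * (t / g)) = 1"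
    proof -
      have "(\<Sum>t\<in>F. cf t * (t / g)) = (\<Sum>t\<in>F. cf t * t) / g"
        by (simp add: sum_divide_distrib)
      then show ?thesis using gd g0 by simp
    qed
    ultimately show False using one_notin_PP by simp
  qed
  then obtain t0 where t0: "t0 \<in> F" "g / t0 \<in> IC" by blast
  then obtain s0 where s0: "s0 \<in> S" "t0 = s0 ^ n" using F by blast
  have s00: "s0 \<noteq> 0" and s0I: "s0 \<in> I" using s0 S S_def by auto
  have div: "s / s0 \<in> IC" if s: "s \<in> S" for s
  proof -
    obtain r where r: "r \<in> IC" "s ^ n = g * r" using sn[OF s] by blast
    have "(s / s0) ^ n = (g / t0) * r" using r s0 s00 by (simp add: power_divide)
    also have "\<dots> \<in> IC" using t0 r ic_mult by blast
    finally show ?thesis using ic_root_closed n by blast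
  qed
  have "I = {s0 * r | r. r \<in> IC}"
  proof (intro equalityI subsetI)
    fix x assume x: "x \<in> I"
    show "x \<in> {s0 * r | r. r \<in> IC}"
    proof (cases "x = 0")
      case True then show ?thesis using ic_R[OF sr sr_0[OF sr]] by force
    next
      case False
      then have "x \<in> S" using x S_def by blast
      then have "x = s0 * (x / s0)" "x / s0 \<in> IC" using div s00 by auto
      then show ?thesis by blast
    qed
  next
    fix x assume "x \<in> {s0 * r | r. r \<in> IC}"
    then obtain r where "r \<in> IC" "x = s0 * r" by blast
    moreover have "\<forall>r\<in>IC. \<forall>a\<in>I. r * a \<in> I" using I by (simp add: is_ideal_def)
    ultimately have "r * s0 \<in> I" using s0I by blast
    then show "x \<in> I" using \<open>x = s0 * r\<close> by (simp add: mult.commute)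
  qed
  moreover have "s0 \<in> IC" using s0I IIC by blast
  ultimately show ?thesis unfolding principal_in_def by blast
qed

lemma notfield_IC:
  assumes nf: "\<not> is_field_set R"
  shows "\<not> is_field_set IC"
proof
  assume fI: "is_field_set IC"
  from nf obtain d where d: "d \<in> R" "d \<noteq> 0" "\<not> (\<exists>y\<in>R. d * y = 1)"
    unfolding is_field_set_def by blast
  obtain y where y: "y \<in> IC" "d * y = 1" using fI d ic_R[OF sr] unfolding is_field_set_def by blast
  obtain N where N: "N \<ge> 1" "\<forall>x\<in>IC. x ^ N \<in> R" using bounded by blast
  have dd: "d * d ^ (N - 1) = d ^ N" using N by (cases N) auto
  have "d * (d ^ (N - 1) * y ^ N) = (d * d ^ (N - 1)) * y ^ N" by (simp only: mult.assoc)
  also have "\<dots> = (d * y) ^ N" by (simp only: dd power_mult_distrib)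
  finally have "d * (d ^ (N - 1) * y ^ N) = (d * y) ^ N" .
  then have "d * (d ^ (N - 1) * y ^ N) = 1" using y by simp
  moreover have "d ^ (N - 1) * y ^ N \<in> R" using d y N sr by (auto intro: sr_mult sr_pow)
  ultimately show False using d by blast
qed

lemma DVR_IC:
  assumes "quasilocal R" "\<not> is_field_set R"
  shows "DVR IC"
  unfolding DVR_def using ql_IC[OF assms(1)] principal_IC[OF assms(1)] notfield_IC[OF assms(2)] by blast

end


lemma sr_dom: "subring_set (dom_in_fract :: 'a::idom fract set)"
  unfolding subring_set_def dom_in_fract_def
proof (intro conjI ballI)
  show "(0::'a fract) \<in> range (\<lambda>a. Fraction_Field.Fract a 1)" by (auto simp: Zero_fract_def)
  show "(1::'a fract) \<in> range (\<lambda>a. Fraction_Field.Fract a 1)" by (auto simp: One_fract_def)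
  fix x y :: "'a fract" assume "x \<in> range (\<lambda>a. Fraction_Field.Fract a 1)" "y \<in> range (\<lambda>a. Fraction_Field.Fract a 1)"
  then obtain a b where "x = Fraction_Field.Fract a 1" "y = Fraction_Field.Fract b 1" by blast
  then show "x + y \<in> range (\<lambda>a. Fraction_Field.Fract a 1)" "x * y \<in> range (\<lambda>a. Fraction_Field.Fract a 1)"
    "- x \<in> range (\<lambda>a. Fraction_Field.Fract a 1)" by auto
qed

theorem theorem4:
  fixes D :: "'a::idom fract set" and Dbar :: "'a fract set"
  defines "D \<equiv> dom_in_fract"
      and "Dbar \<equiv> integral_closure dom_in_fract"
  assumes api: "api_set D"
      and cond: "conductor D Dbar \<noteq> {0}"
  shows "bounded_root_ext D Dbar \<and> api_set Dbar \<and>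
         (quasilocal D \<and> \<not> is_field_set D \<longrightarrow> DVR Dbar)"
proof -
  have "0 \<in> conductor D Dbar" using sr_0[OF sr_dom] unfolding conductor_def D_def by auto
  then obtain c where c: "c \<in> conductor D Dbar" "c \<noteq> 0" using cond by blast
  interpret apictx D c
    using api sr_dom c unfolding apictx_def D_def Dbar_def by blast
  have "bounded_root_ext D Dbar" unfolding bounded_root_ext_def Dbar_def D_def
    using bounded unfolding D_def by blast
  moreover have "api_set Dbar" using api_IC unfolding Dbar_def D_def .
  moreover have "quasilocal D \<and> \<not> is_field_set D \<longrightarrow> DVR Dbar"
    using DVR_IC unfolding Dbar_def D_def by blast
  ultimately show ?thesis by blast
qed


end
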